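(* Let $n\geq 5$ be an integer. There is a set $X$ of partitions of $n$ with the following properties: (1) there is no integer $1\le i\le n/2$ which is a partial sum of $x$ for every $x\in X$; (2) for every $x\in X$ there exists an integer $1\le i\le n/2$ which is a partial sum of $y$ for every $y\in X\setminus\{x\}$; (3) $|X|>\frac n2-\log n$.
   Context: Logarithms are in base $2$. A partition of $n$ is a finite multiset $(a_1,\dots,a_t)$ of positive integers with sum $n$. An integer $m$ is a partial sum of $(a_1,\dots,a_t)$ if $m=a_{j_1}+\cdots+a_{j_\ell}$ for some $\ell\ge 1$ and $1\le j_1<\dots<j_\ell\le t$. *)

theory Defs
  imports Complex_Main "HOL-Library.Multiset"
begin

definition is_partition :: "nat \<Rightarrow> nat multiset \<Rightarrow> bool" where
  "is_partition n x \<longleftrightarrow> (\<forall>a \<in># x. a > 0) \<and> sum_mset x = n"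

definition is_partial_sum :: "nat \<Rightarrow> nat multiset \<Rightarrow> bool" where
  "is_partial_sum m x \<longleftrightarrow> (\<exists>y. y \<subseteq># x \<and> y \<noteq> {#} \<and> sum_mset y = m)"

end

theory Submission
  imports Defs
begin

definition ps :: "nat multiset \<Rightarrow> nat set" where
  "ps x = sum_mset ` {y. y \<subseteq># x}"

lemma ps_empty: "ps {#} = {0}"
  by (auto simp: ps_def)

lemma sub_add_notin:
  assumes "y \<subseteq># add_mset p x" "p \<notin># y" shows "y \<subseteq># x"
  unfolding subseteq_mset_def
proof
  fix a
  have "count y a \<le> count (add_mset p x) a" using assms(1) by (rule mset_subset_eq_count)
  then show "count y a \<le> count x a" using assms(2) by (cases "a = p") (auto simp: not_in_iff)
qed

lemma ps_mem_add: "t \<in> ps (add_mset p x) \<longleftrightarrow> t \<in> ps x \<or> (p \<le> t \<and> t - p \<in> ps x)"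
proof
  assume "t \<in> ps (add_mset p x)"
  then obtain y where y: "y \<subseteq># add_mset p x" "t = sum_mset y" unfolding ps_def by blast
  show "t \<in> ps x \<or> (p \<le> t \<and> t - p \<in> ps x)"
  proof (cases "p \<in># y")
    case True
    define z where "z = y - {#p#}"
    have yz: "y = add_mset p z" using True by (simp add: z_def)
    have "z \<subseteq># x" using y(1) unfolding yz by (simp only: mset_subset_eq_add_mset_cancel)
    moreover have "t = sum_mset z + p" using y(2) yz by simp
    moreover have "t - p = sum_mset z" "p \<le> t" using \<open>t = sum_mset z + p\<close> by simp_all
    ultimately have "t - p \<in> ps x" unfolding ps_def by (intro rev_image_eqI[of z]) simp_all
    then show ?thesis using \<open>p \<le> t\<close> by simp
  next
    case False
    then have "y \<subseteq># x" by (rule sub_add_notin[OF y(1)])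
    then have "t \<in> ps x" unfolding ps_def using y(2) by (intro rev_image_eqI[of y]) simp_all
    then show ?thesis by simp
  qed
next
  assume "t \<in> ps x \<or> (p \<le> t \<and> t - p \<in> ps x)"
  then show "t \<in> ps (add_mset p x)"
  proof
    assume "t \<in> ps x"
    then obtain y where "y \<subseteq># x" "t = sum_mset y" unfolding ps_def by blast
    then have "y \<subseteq># add_mset p x"
      by (intro mset_subset_eqI) (metis count_add_mset le_SucI mset_subset_eq_count)
    then show ?thesis using \<open>t = sum_mset y\<close> unfolding ps_def by (intro rev_image_eqI[of y]) simp_all
  next
    assume a: "p \<le> t \<and> t - p \<in> ps x"
    then obtain y where "y \<subseteq># x" "t - p = sum_mset y" unfolding ps_def by blast
    then have "add_mset p y \<subseteq># add_mset p x" "sum_mset (add_mset p y) = t" using a by (simp_all, linarith)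
    then show ?thesis unfolding ps_def by (intro rev_image_eqI[of "add_mset p y"]) simp_all
  qed
qed

lemma partial_ps: "1 \<le> i \<Longrightarrow> is_partial_sum i x \<longleftrightarrow> i \<in> ps x"
proof
  assume "is_partial_sum i x"
  then obtain y where "y \<subseteq># x" "sum_mset y = i" unfolding is_partial_sum_def by blast
  then show "i \<in> ps x" unfolding ps_def by (intro rev_image_eqI[of y]) simp_all
next
  assume "1 \<le> i" "i \<in> ps x"
  then obtain y where "y \<subseteq># x" "sum_mset y = i" unfolding ps_def by blast
  moreover have "y \<noteq> {#}" using \<open>1 \<le> i\<close> \<open>sum_mset y = i\<close> by auto
  ultimately show "is_partial_sum i x" unfolding is_partial_sum_def by blast
qed

lemma ps_ones: "t \<in> ps (replicate_mset k 1) \<longleftrightarrow> t \<le> k"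
proof (induction k arbitrary: t)
  case 0
  then show ?case by (simp add: ps_empty)
next
  case (Suc k)
  have e: "replicate_mset (Suc k) (1::nat) = add_mset 1 (replicate_mset k 1)" by simp
  show ?case unfolding e ps_mem_add Suc.IH by arith
qed

definition lad :: "nat \<Rightarrow> nat \<Rightarrow> nat multiset \<Rightarrow> bool" where
  "lad a T S \<longleftrightarrow> (\<forall>q\<in>#S. 0 < q) \<and> sum_mset S = T \<and> (\<forall>t. t \<in> ps S \<longleftrightarrow> t \<le> T \<and> t \<noteq> a \<and> t \<noteq> T - a)"

lemma lad_base2:
  assumes "1 \<le> a" shows "lad a (2*a) (add_mset (a+1) (replicate_mset (a-1) 1))"
  unfolding lad_def
proof (intro conjI allI)
  show "\<forall>q\<in>#add_mset (a + 1) (replicate_mset (a - 1) 1). 0 < q" by simp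
  show "sum_mset (add_mset (a + 1) (replicate_mset (a - 1) 1)) = 2 * a" using assms by simp
  fix t show "t \<in> ps (add_mset (a + 1) (replicate_mset (a - 1) 1)) \<longleftrightarrow> t \<le> 2 * a \<and> t \<noteq> a \<and> t \<noteq> 2 * a - a"
    unfolding ps_mem_add ps_ones using assms by arith
qed

lemma lad_base2p1:
  assumes "1 \<le> a" shows "lad a (2*a+1) (add_mset (a+2) (replicate_mset (a-1) 1))"
  unfolding lad_def
proof (intro conjI allI)
  show "\<forall>q\<in>#add_mset (a + 2) (replicate_mset (a - 1) 1). 0 < q" by simp
  show "sum_mset (add_mset (a + 2) (replicate_mset (a - 1) 1)) = 2 * a + 1" using assms by simp
  fix t show "t \<in> ps (add_mset (a + 2) (replicate_mset (a - 1) 1)) \<longleftrightarrow> t \<le> 2 * a + 1 \<and> t \<noteq> a \<and> t \<noteq> 2 * a + 1 - a"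
    unfolding ps_mem_add ps_ones using assms by arith
qed

lemma lad_step_base:
  assumes "lad a (2*a) S" "a < p" "p \<le> 2*a+1"
  shows "lad a (2*a+p) (add_mset p S)"
proof -
  have S: "\<And>t. t \<in> ps S \<longleftrightarrow> t \<le> 2*a \<and> t \<noteq> a \<and> t \<noteq> 2*a - a"
    "\<forall>q\<in>#S. 0 < q" "sum_mset S = 2*a" using assms(1) unfolding lad_def by blast+
  show ?thesis unfolding lad_def
  proof (intro conjI allI)
    show "\<forall>q\<in>#add_mset p S. 0 < q" using S(2) assms(2) by auto
    show "sum_mset (add_mset p S) = 2*a+p" using S(3) by simp
    fix t show "t \<in> ps (add_mset p S) \<longleftrightarrow> t \<le> 2*a+p \<and> t \<noteq> a \<and> t \<noteq> 2*a+p - a"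
      unfolding ps_mem_add S(1) using assms(2,3) by arith
  qed
qed

lemma lad_step:
  assumes "lad a T S" "2*a < T" "a < p" "p \<le> T - a" "p \<noteq> T - 2*a"
  shows "lad a (T+p) (add_mset p S)"
proof -
  have S: "\<And>t. t \<in> ps S \<longleftrightarrow> t \<le> T \<and> t \<noteq> a \<and> t \<noteq> T - a"
    "\<forall>q\<in>#S. 0 < q" "sum_mset S = T" using assms(1) unfolding lad_def by blast+
  show ?thesis unfolding lad_def
  proof (intro conjI allI)
    show "\<forall>q\<in>#add_mset p S. 0 < q" using S(2) assms(3) by auto
    show "sum_mset (add_mset p S) = T+p" using S(3) by simp
    fix t show "t \<in> ps (add_mset p S) \<longleftrightarrow> t \<le> T+p \<and> t \<noteq> a \<and> t \<noteq> T+p - a"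
      unfolding ps_mem_add S(1) using assms(2-5) by arith
  qed
qed

definition valid :: "nat \<Rightarrow> nat \<Rightarrow> bool" where
  "valid a T \<longleftrightarrow> 1 \<le> a \<and> (T = 2*a \<or> T = 2*a+1 \<or> (3*a+1 \<le> T \<and> T \<le> 4*a+1) \<or> (4*a+3 \<le> T \<and> \<not>(a = 1 \<and> T = 8)))"

lemma lad_exists: "valid a T \<Longrightarrow> \<exists>S. lad a T S"
proof (induction T rule: less_induct)
  case (less T)
  have a1: "1 \<le> a" using less.prems unfolding valid_def by blast
  consider "T = 2*a" | "T = 2*a+1" | "3*a+1 \<le> T \<and> T \<le> 4*a+1" | "4*a+3 \<le> T \<and> \<not>(a = 1 \<and> T = 8)"
    using less.prems unfolding valid_def by blast
  then show ?case
  proof cases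
    case 1 then show ?thesis using lad_base2[OF a1] by blast
  next
    case 2 then show ?thesis using lad_base2p1[OF a1] by blast
  next
    case 3
    have "lad a (2*a+(T-2*a)) (add_mset (T-2*a) (add_mset (a+1) (replicate_mset (a-1) 1)))"
      by (rule lad_step_base[OF lad_base2[OF a1]]) (use 3 in arith)+
    moreover have eq: "2*a + (T - 2*a) = T" using 3 by arith
    ultimately show ?thesis by (metis eq)
  next
    case 4
    show ?thesis
    proof (cases "T = 5*a+3 \<or> (a = 1 \<and> T = 10)")
      case True
      define T' where "T' = (if a = 1 then 7 else 4*a+1)"
      define p where "p = T - T'"
      have v: "valid a T'" unfolding valid_def T'_def using a1 by auto
      have "T' < T" unfolding T'_def using True 4 by auto
      then obtain S where S: "lad a T' S" using less.IH v by blast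
      have "lad a (T'+p) (add_mset p S)"
        by (rule lad_step[OF S]) (use True 4 a1 in \<open>auto simp: T'_def p_def\<close>)
      moreover have "T' + p = T" using \<open>T' < T\<close> unfolding p_def by simp
      ultimately show ?thesis by auto
    next
      case False
      define T' where "T' = T - (a+1)"
      have v: "valid a T'" unfolding valid_def T'_def using a1 4 False by auto
      have "T' < T" unfolding T'_def using 4 a1 by auto
      then obtain S where S: "lad a T' S" using less.IH v by blast
      have "lad a (T'+(a+1)) (add_mset (a+1) S)"
        by (rule lad_step[OF S]) (use False 4 a1 in \<open>auto simp: T'_def\<close>)
      moreover have "T' + (a+1) = T" using 4 unfolding T'_def by simp
      ultimately show ?thesis by auto
    qed
  qed
qed

lemma lad_plus:
  assumes "lad a T S" "1 \<le> c" "T + c = n"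
  shows "is_partition n (add_mset c S)"
    "\<And>t. t \<in> ps (add_mset c S) \<longleftrightarrow> (t \<le> T \<and> t \<noteq> a \<and> t \<noteq> T - a) \<or> (c \<le> t \<and> t - c \<le> T \<and> t - c \<noteq> a \<and> t - c \<noteq> T - a)"
proof -
  have S: "\<And>t. t \<in> ps S \<longleftrightarrow> t \<le> T \<and> t \<noteq> a \<and> t \<noteq> T - a"
    "\<forall>q\<in>#S. 0 < q" "sum_mset S = T" using assms(1) unfolding lad_def by blast+
  show "is_partition n (add_mset c S)" unfolding is_partition_def using S(2,3) assms(2,3) by auto
  fix t show "t \<in> ps (add_mset c S) \<longleftrightarrow> (t \<le> T \<and> t \<noteq> a \<and> t \<noteq> T - a) \<or> (c \<le> t \<and> t - c \<le> T \<and> t - c \<noteq> a \<and> t - c \<noteq> T - a)"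
    unfolding ps_mem_add S(1) by blast
qed

lemma lad_part: "lad a T S \<Longrightarrow> is_partition T S"
  unfolding lad_def is_partition_def by auto

lemma lad_ps: "lad a T S \<Longrightarrow> t \<in> ps S \<longleftrightarrow> t \<le> T \<and> t \<noteq> a \<and> t \<noteq> T - a"
  unfolding lad_def by blast

lemma halving_exists: "1 \<le> d \<Longrightarrow> d \<le> (D::nat) \<Longrightarrow> \<exists>j. d \<le> D div 2^j \<and> D div 2^j + 1 \<le> 2*d"
proof (induction D rule: less_induct)
  case (less D)
  show ?case
  proof (cases "D + 1 \<le> 2*d")
    case True then show ?thesis using less.prems by (intro exI[of _ 0]) simp
  next
    case False
    then have "d \<le> D div 2" "D div 2 < D" using less.prems by auto
    then obtain j where j: "d \<le> D div 2 div 2^j" "D div 2 div 2^j + 1 \<le> 2*d" using less.IH less.prems by blast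
    have "D div 2 div 2^j = D div 2^(Suc j)" by (simp add: div_mult2_eq)
    then show ?thesis using j by (intro exI[of _ "Suc j"]) simp
  qed
qed

lemma halving_le: "j \<ge> 1 \<Longrightarrow> 2 * (D div 2^j) \<le> (D::nat)"
proof -
  assume "j \<ge> 1"
  then obtain i where "j = Suc i" by (cases j) auto
  then have "D div 2^j = D div 2 div 2^i" by (simp add: div_mult2_eq mult.commute)
  also have "\<dots> \<le> D div 2" by (rule div_le_dividend)
  finally show ?thesis by linarith
qed

definition Wt :: "nat \<Rightarrow> nat set" where
  "Wt D = {w. 1 \<le> w \<and> (\<exists>j. w = D div 2^j)}"

lemma Wt_prop: "w \<in> Wt D \<Longrightarrow> 1 \<le> w \<and> w \<le> D \<and> (w = D \<or> 2*w \<le> D)"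
proof -
  assume "w \<in> Wt D"
  then obtain j where j: "1 \<le> w" "w = D div 2^j" unfolding Wt_def by blast
  show ?thesis
  proof (cases "j = 0")
    case True then show ?thesis using j by simp
  next
    case False then show ?thesis using j halving_le[of j D] by auto
  qed
qed

lemma Wt_exists: "1 \<le> d \<Longrightarrow> d \<le> D \<Longrightarrow> \<exists>w\<in>Wt D. d \<le> w \<and> w + 1 \<le> 2*d"
  using halving_exists[of d D] unfolding Wt_def by fastforce

lemma Wt_card: "1 \<le> D \<Longrightarrow> D < 2^K \<Longrightarrow> card (Wt D) \<le> K"
proof -
  assume a: "1 \<le> D" "D < 2^K"
  have "Wt D \<subseteq> (\<lambda>j. D div 2^j) ` {..<K}"
  proof
    fix w assume "w \<in> Wt D"
    then obtain j where j: "1 \<le> w" "w = D div 2^j" unfolding Wt_def by blast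
    have "j < K"
    proof (rule ccontr)
      assume "\<not> j < K"
      then have "(2::nat)^K \<le> 2^j" by simp
      then have "D < 2^j" using a by linarith
      then show False using j by simp
    qed
    then show "w \<in> (\<lambda>j. D div 2^j) ` {..<K}" using j by blast
  qed
  then have "card (Wt D) \<le> card ((\<lambda>j. D div 2^j) ` {..<K})" by (rule card_mono[rotated]) simp
  also have "\<dots> \<le> card {..<K}" by (rule card_image_le) simp
  finally show ?thesis by simp
qed

lemma pow_exists: "1 \<le> (D::nat) \<Longrightarrow> \<exists>K. D < 2^K \<and> 2^K \<le> 2*D"
proof (induction D rule: less_induct)
  case (less D)
  show ?case
  proof (cases "D = 1")
    case True then show ?thesis by (intro exI[of _ 1]) simp
  next
    case False
    then have "1 \<le> D div 2" "D div 2 < D" using less.prems by auto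
    then obtain K where K: "D div 2 < 2^K" "2^K \<le> 2*(D div 2)" using less.IH by blast
    have "D < 2^Suc K" using K(1) by simp
    moreover have "2^Suc K \<le> 2*D" using K(2) by simp
    ultimately show ?thesis by blast
  qed
qed

definition Wm :: "nat \<Rightarrow> nat set" where
  "Wm n = (if n mod 6 = 0 \<or> n mod 4 = 2 then {n div 2} else {})"
definition WW :: "nat \<Rightarrow> nat set" where
  "WW n = Wt ((n div 2 - 1) div 3) \<union> Wm n"
definition VV :: "nat \<Rightarrow> nat set" where
  "VV n = {1..n div 2} - WW n"
definition GG :: "nat \<Rightarrow> nat \<Rightarrow> nat" where
  "GG n w = (if w = n div 2 then (if n mod 6 = 0 then n div 3 else (n-2) div 4) else n div 2 - w)"

lemma main_exists:
  assumes n18: "18 \<le> n" and vV: "v \<in> VV n"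
  shows "\<exists>x. is_partition n x \<and> (\<forall>u\<in>VV n. u \<noteq> v \<longrightarrow> u \<in> ps x) \<and> v \<notin> ps x
             \<and> (\<forall>w\<in>WW n. GG n w = v \<longrightarrow> w \<notin> ps x)"
proof -
  define m where "m = n div 2"
  define D where "D = (m - 1) div 3"
  define cnd where "cnd = (n mod 6 = 0 \<or> n mod 4 = 2)"
  have F1: "2*m \<le> n" "n \<le> 2*m+1" unfolding m_def by auto
  have F2: "3*D + 1 \<le> m" "m \<le> 3*D+3" using n18 unfolding D_def m_def by auto
  have F3: "9 \<le> m" "2 \<le> D" using n18 F1 F2 by auto
  have WWe: "WW n = Wt D \<union> (if cnd then {m} else {})" unfolding WW_def Wm_def D_def m_def cnd_def by simp
  have VVe: "VV n = {1..m} - WW n" unfolding VV_def m_def by simp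
  have uV: "\<And>u. u \<in> VV n \<Longrightarrow> 1 \<le> u \<and> u \<le> m \<and> u \<notin> Wt D \<and> (cnd \<longrightarrow> u \<noteq> m)"
    unfolding VVe WWe by auto
  have v1: "1 \<le> v" "v \<le> m" "v \<notin> Wt D" "cnd \<Longrightarrow> v \<noteq> m" using uV[OF vV] by auto
  have DW: "D \<in> Wt D" unfolding Wt_def using F3 by (auto intro: exI[of _ 0])
  have GGf: "\<And>w. w \<in> WW n \<Longrightarrow> GG n w = v \<Longrightarrow>
      (w \<in> Wt D \<and> w + v = m) \<or> (w = m \<and> cnd \<and> (if n mod 6 = 0 then v = n div 3 else v = (n-2) div 4))"
  proof -
    fix w assume w: "w \<in> WW n" "GG n w = v"
    show "(w \<in> Wt D \<and> w + v = m) \<or> (w = m \<and> cnd \<and> (if n mod 6 = 0 then v = n div 3 else v = (n-2) div 4))"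
    proof (cases "w \<in> Wt D")
      case True
      then have "w \<le> D" "1 \<le> w" using Wt_prop by blast+
      then have "w \<noteq> m" "w \<le> m" using F2 by auto
      then have "GG n w = m - w" unfolding GG_def m_def by simp
      then show ?thesis using w(2) True \<open>w \<le> m\<close> by auto
    next
      case False
      then have "w = m" "cnd" using w(1) unfolding WWe by (auto split: if_splits)
      then show ?thesis using w(2) unfolding GG_def m_def by auto
    qed
  qed

  consider (c1) "v = m" | (c2) "v \<noteq> m" "n mod 6 = 0" "v = n div 3"
    | (c3) "v \<noteq> m" "\<not> (n mod 6 = 0 \<and> v = n div 3)" "n < 3*v+1"
    | (c4) "v \<noteq> m" "\<not> (n mod 6 = 0 \<and> v = n div 3)" "3*v+1 \<le> n" "n mod 4 = 2" "v = (n-2) div 4"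
    | (c5) "v \<noteq> m" "\<not> (n mod 6 = 0 \<and> v = n div 3)" "3*v+1 \<le> n" "\<not> (n mod 4 = 2 \<and> v = (n-2) div 4)"
    by linarith
  then show ?thesis
  proof cases
    case c1
    have "valid m n" unfolding valid_def using F1 F3 by auto
    then obtain S where S: "lad m n S" using lad_exists by blast
    have ps: "\<And>t. t \<in> ps S \<longleftrightarrow> t \<le> n \<and> t \<noteq> m \<and> t \<noteq> n - m" using lad_ps[OF S] .
    show ?thesis
    proof (intro exI[of _ S] conjI ballI impI)
      show "is_partition n S" using lad_part[OF S] .
      fix u assume "u \<in> VV n" "u \<noteq> v"
      then show "u \<in> ps S" unfolding ps using uV[of u] c1 F1 by auto
    next
      show "v \<notin> ps S" unfolding ps c1 by simp
    next
      fix w assume "w \<in> WW n" "GG n w = v"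
      then show "w \<notin> ps S" using GGf[of w] c1 v1(4) Wt_prop[of w D] by auto
    qed
  next
    case c2
    define k where "k = n div 6"
    have nk: "n = 6*k" using div_mult_mod_eq[of n 6] c2(2) unfolding k_def by simp
    have mk: "m = 3*k" "v = 2*k" "D + 1 = k" using nk c2(3) F2 unfolding m_def by auto
    have "valid D (m-1)" unfolding valid_def using F3 mk by auto
    then obtain S where S: "lad D (m-1) S" using lad_exists by blast
    have c: "1 \<le> m+1" "(m-1) + (m+1) = n" using mk nk F3 by auto
    note P = lad_plus[OF S c]
    have cn: cnd unfolding cnd_def using c2 by simp
    show ?thesis
    proof (intro exI[of _ "add_mset (m+1) S"] conjI ballI impI)
      show "is_partition n (add_mset (m+1) S)" using P(1) .
      fix u assume u: "u \<in> VV n" "u \<noteq> v"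
      have "u \<noteq> D" using uV[OF u(1)] DW by blast
      then show "u \<in> ps (add_mset (m+1) S)" unfolding P(2) using uV[OF u(1)] cn u(2) mk by auto
    next
      show "v \<notin> ps (add_mset (m+1) S)" unfolding P(2) using mk by auto
    next
      fix w assume w: "w \<in> WW n" "GG n w = v"
      show "w \<notin> ps (add_mset (m+1) S)"
      proof (cases "w \<in> Wt D \<and> w + v = m")
        case True then show ?thesis using Wt_prop[of w D] mk by auto
      next
        case False then have "w = m" using GGf[OF w] by blast
        then show ?thesis unfolding P(2) by auto
      qed
    qed
  next
    case c3
    have vm: "v < m" using v1(2) c3(1) by simp
    have dD: "m - v \<le> D"
    proof -
      show ?thesis
      proof (rule ccontr)
        assume "\<not> m - v \<le> D"
        then have "v + D + 1 \<le> m" using vm by arith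
        then have e: "n = 3*v" "n = 6*D+6" using c3(3) F1 F2 by linarith+
        then have "n = 6*(D+1)" "n = 3*v" by simp_all
        then have "n mod 6 = 0" "v = n div 3" by simp_all
        then show False using c3(2) by simp
      qed
    qed
    obtain w where w: "w \<in> Wt D" "m - v \<le> w" "w + 1 \<le> 2*(m-v)" "m - v \<in> Wt D \<longrightarrow> w = m - v"
    proof (cases "m - v \<in> Wt D")
      case True then show ?thesis using that[of "m-v"] vm by simp
    next
      case False
      have "1 \<le> m - v" using vm by simp
      then have "\<exists>w\<in>Wt D. m - v \<le> w \<and> w + 1 \<le> 2*(m-v)" using Wt_exists[of "m-v" D] dD by blast
      then obtain w where "w\<in>Wt D" "m - v \<le> w" "w + 1 \<le> 2*(m-v)" by blast
      then show ?thesis using that[of w] False by blast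
    qed
    have wp: "1 \<le> w" "w \<le> D" "w = D \<or> 2*w \<le> D" using Wt_prop[OF w(1)] by auto
    have g1: "2*w+1 \<le> v" using wp(2) w(2) F2 vm by linarith
    have g2: "v \<noteq> 3*w+2" using wp w(2,3) F2 F3 vm by auto
    have g3: "\<not> (w = 1 \<and> v = 7)" using w(2) vm n18 F1 by auto
    have "valid w (v+w)" unfolding valid_def using g1 g2 g3 wp(1) by arith
    then obtain S where S: "lad w (v+w) S" using lad_exists by blast
    have c: "1 \<le> n - v - w" "(v+w) + (n - v - w) = n" "v < n - v - w" using w(3) vm F1 by auto
    note P = lad_plus[OF S c(1,2)]
    show ?thesis
    proof (intro exI[of _ "add_mset (n-v-w) S"] conjI ballI impI)
      show "is_partition n (add_mset (n-v-w) S)" using P(1) .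
      fix u assume u: "u \<in> VV n" "u \<noteq> v"
      have "u \<noteq> w" using uV[OF u(1)] w(1) by blast
      then show "u \<in> ps (add_mset (n-v-w) S)" unfolding P(2) using uV[OF u(1)] u(2) w(2) vm by auto
    next
      show "v \<notin> ps (add_mset (n-v-w) S)" unfolding P(2) using c(3) by auto
    next
      fix w' assume w': "w' \<in> WW n" "GG n w' = v"
      show "w' \<notin> ps (add_mset (n-v-w) S)"
      proof (cases "w' \<in> Wt D \<and> w' + v = m")
        case True
        then have "w' = w" using w(4) by auto
        then show ?thesis unfolding P(2) using c(3) g1 by auto
      next
        case False
        then have h: "if n mod 6 = 0 then v = n div 3 else v = (n-2) div 4" using GGf[OF w'] by blast
        show ?thesis
        proof (cases "n mod 6 = 0")
          case True then show ?thesis using h c3(2) by simp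
        next
          case False then have "v = (n-2) div 4" using h by simp
          then show ?thesis using c3(3) n18 by linarith
        qed
      qed
    qed
  next
    case c4
    have n4: "n = 4*(n div 4) + 2" using div_mult_mod_eq[of n 4] c4(4) by simp
    then have "(n-2) div 4 = n div 4" by (metis add_diff_cancel_right' nonzero_mult_div_cancel_left zero_neq_numeral)
    then have nv1: "n = 4*v+2" using n4 c4(5) by simp
    then have nv: "n = 4*v+2" "m = 2*v+1" using F1 by linarith+
    have "valid v (3*v+1)" unfolding valid_def using v1(1) by auto
    then obtain S where S: "lad v (3*v+1) S" using lad_exists by blast
    have c: "1 \<le> v+1" "(3*v+1) + (v+1) = n" using nv by auto
    note P = lad_plus[OF S c]
    have cn: cnd unfolding cnd_def using c4 by simp
    show ?thesis
    proof (intro exI[of _ "add_mset (v+1) S"] conjI ballI impI)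
      show "is_partition n (add_mset (v+1) S)" using P(1) .
      fix u assume u: "u \<in> VV n" "u \<noteq> v"
      then show "u \<in> ps (add_mset (v+1) S)" unfolding P(2) using uV[OF u(1)] cn nv by auto
    next
      show "v \<notin> ps (add_mset (v+1) S)" unfolding P(2) by auto
    next
      fix w assume w: "w \<in> WW n" "GG n w = v"
      show "w \<notin> ps (add_mset (v+1) S)"
      proof (cases "w \<in> Wt D \<and> w + v = m")
        case True then show ?thesis using Wt_prop[of w D] nv F2 by auto
      next
        case False then have "w = m" using GGf[OF w] by blast
        then show ?thesis unfolding P(2) using nv by auto
      qed
    qed
  next
    case c5
    have ne: "n \<noteq> 4*v+2"
    proof
      assume "n = 4*v+2"
      then have "n mod 4 = 2" "v = (n-2) div 4" by presburger+
      then show False using c5(4) by blast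
    qed
    have "valid v n" unfolding valid_def using v1(1) c5(3) ne n18 by arith
    then obtain S where S: "lad v n S" using lad_exists by blast
    have ps: "\<And>t. t \<in> ps S \<longleftrightarrow> t \<le> n \<and> t \<noteq> v \<and> t \<noteq> n - v" using lad_ps[OF S] .
    show ?thesis
    proof (intro exI[of _ S] conjI ballI impI)
      show "is_partition n S" using lad_part[OF S] .
      fix u assume "u \<in> VV n" "u \<noteq> v"
      then show "u \<in> ps S" unfolding ps using uV[of u] c5(3) F1 by auto
    next
      show "v \<notin> ps S" unfolding ps by simp
    next
      fix w assume w: "w \<in> WW n" "GG n w = v"
      show "w \<notin> ps S"
      proof (cases "w \<in> Wt D \<and> w + v = m")
        case True then show ?thesis using Wt_prop[of w D] F1 F2 c5(3) by auto
      next
        case False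
        then have h: "cnd" "if n mod 6 = 0 then v = n div 3 else v = (n-2) div 4" using GGf[OF w] by blast+
        show ?thesis
        proof (cases "n mod 6 = 0")
          case True then show ?thesis using h c5(2) by simp
        next
          case False then have "v = (n-2) div 4" "n mod 4 = 2" using h unfolding cnd_def by auto
          then show ?thesis using c5(4) by blast
        qed
      qed
    qed
  qed
qed

lemma abstract:
  fixes n m :: nat and V :: "nat set" and f :: "nat \<Rightarrow> nat multiset"
  assumes m: "m = n div 2" and fin: "finite V" and Vsub: "V \<subseteq> {1..m}"
    and part: "\<forall>v\<in>V. is_partition n (f v)"
    and miss: "\<forall>v\<in>V. v \<notin> ps (f v)"
    and cov: "\<forall>v\<in>V. \<forall>u\<in>V. u \<noteq> v \<longrightarrow> u \<in> ps (f v)"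
    and rest: "\<forall>i. 1 \<le> i \<and> i \<le> m \<and> i \<notin> V \<longrightarrow> (\<exists>v\<in>V. i \<notin> ps (f v))"
    and crd: "real (card V) > real n / 2 - log 2 (real n)"
  shows "\<exists>X :: nat multiset set.
           (\<forall>x\<in>X. is_partition n x) \<and>
           \<not> (\<exists>i::nat. 1 \<le> i \<and> 2 * i \<le> n \<and> (\<forall>x\<in>X. is_partial_sum i x)) \<and>
           (\<forall>x\<in>X. \<exists>i::nat. 1 \<le> i \<and> 2 * i \<le> n \<and> (\<forall>y\<in>X - {x}. is_partial_sum i y)) \<and>
           real (card X) > real n / 2 - log 2 (real n)"
proof (intro exI[of _ "f ` V"] conjI)
  show "\<forall>x\<in>f ` V. is_partition n x" using part by blast
  have inj: "inj_on f V"
  proof (rule inj_onI)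
    fix u v assume uv: "u \<in> V" "v \<in> V" "f u = f v"
    show "u = v"
    proof (rule ccontr)
      assume "u \<noteq> v"
      then have "u \<in> ps (f v)" using cov[rule_format, OF uv(2) uv(1)] by simp
      then show False using miss uv by auto
    qed
  qed
  then have "card (f ` V) = card V" by (rule card_image)
  then show "real (card (f ` V)) > real n / 2 - log 2 (real n)" using crd by simp
  show "\<not> (\<exists>i::nat. 1 \<le> i \<and> 2 * i \<le> n \<and> (\<forall>x\<in>f ` V. is_partial_sum i x))"
  proof
    assume "\<exists>i::nat. 1 \<le> i \<and> 2 * i \<le> n \<and> (\<forall>x\<in>f ` V. is_partial_sum i x)"
    then obtain i where i: "1 \<le> i" "2 * i \<le> n" "\<forall>x\<in>f ` V. is_partial_sum i x" by blast
    have im: "i \<le> m" using i(2) m by simp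
    have all: "\<forall>v\<in>V. i \<in> ps (f v)" using i(3) partial_ps[OF i(1)] by blast
    show False
    proof (cases "i \<in> V")
      case True then show False using all miss by blast
    next
      case False then obtain v where "v \<in> V" "i \<notin> ps (f v)" using rest i(1) im by blast
      then show False using all by blast
    qed
  qed
  show "\<forall>x\<in>f ` V. \<exists>i::nat. 1 \<le> i \<and> 2 * i \<le> n \<and> (\<forall>y\<in>f ` V - {x}. is_partial_sum i y)"
  proof
    fix x assume "x \<in> f ` V"
    then obtain v where v: "v \<in> V" "x = f v" by blast
    have v1: "1 \<le> v" "v \<le> m" using Vsub v(1) by auto
    have "\<forall>y\<in>f ` V - {x}. is_partial_sum v y"
    proof
      fix y assume "y \<in> f ` V - {x}"
      then obtain u where u: "u \<in> V" "y = f u" "f u \<noteq> f v" using v by blast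
      then have "u \<noteq> v" by blast
      then have "v \<in> ps (f u)" using cov[rule_format, OF u(1) v(1)] by simp
      then show "is_partial_sum v y" using partial_ps[OF v1(1)] u(2) by simp
    qed
    moreover have "2 * v \<le> n" using v1(2) m by simp
    ultimately show "\<exists>i::nat. 1 \<le> i \<and> 2 * i \<le> n \<and> (\<forall>y\<in>f ` V - {x}. is_partial_sum i y)"
      using v1(1) by blast
  qed
qed

lemma log_ge: "2^k \<le> n \<Longrightarrow> real k \<le> log 2 (real n)"
proof -
  assume h: "2^k \<le> n"
  have "(2::real) powr real k = 2^k" by (rule powr_realpow) simp
  also have "(2::real)^k = real (2^k)" by simp
  also have "\<dots> \<le> real n" using h by (metis of_nat_le_iff)
  finally have "2 powr real k \<le> real n" .
  moreover have "(0::nat) < 2^k" by simp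
  then have "0 < real n" using h by linarith
  ultimately show ?thesis by (simp add: le_log_iff)
qed

definition f5 :: "nat \<Rightarrow> nat multiset" where
  "f5 v = ({#5#})"

lemma case5: "\<exists>X :: nat multiset set.
           (\<forall>x\<in>X. is_partition 5 x) \<and>
           \<not> (\<exists>i::nat. 1 \<le> i \<and> 2 * i \<le> 5 \<and> (\<forall>x\<in>X. is_partial_sum i x)) \<and>
           (\<forall>x\<in>X. \<exists>i::nat. 1 \<le> i \<and> 2 * i \<le> 5 \<and> (\<forall>y\<in>X - {x}. is_partial_sum i y)) \<and>
           real (card X) > real 5 / 2 - log 2 (real 5)"
proof (rule abstract[where m=2 and V="{1}" and f=f5])
  show "\<forall>v\<in>{1}. is_partition 5 (f5 v)"
    by (simp add: is_partition_def f5_def)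
  show "\<forall>v\<in>{1}. v \<notin> ps (f5 v)"
    by (simp add: ps_mem_add ps_empty f5_def)
  show "\<forall>v\<in>{1}. \<forall>u\<in>{1}. u \<noteq> v \<longrightarrow> u \<in> ps (f5 v)"
    by (simp add: ps_mem_add ps_empty f5_def)
  show "\<forall>i. 1 \<le> i \<and> i \<le> 2 \<and> i \<notin> {1} \<longrightarrow> (\<exists>v\<in>{1}. i \<notin> ps (f5 v))"
  proof (intro allI impI)
    fix i :: nat assume "1 \<le> i \<and> i \<le> 2 \<and> i \<notin> {1}"
    then consider "i = 2" by force
    then show "\<exists>v\<in>{1}. i \<notin> ps (f5 v)"
    proof cases
      case 1 then show ?thesis by (intro bexI[of _ 1]) (simp_all add: ps_mem_add ps_empty f5_def)
    qed
  qed
  have "real 2 \<le> log 2 (real 5)" by (rule log_ge) simp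
  then show "real (card {1::nat}) > real 5 / 2 - log 2 (real 5)" by simp
qed simp_all

definition f6 :: "nat \<Rightarrow> nat multiset" where
  "f6 v = (if v=1 then {#4,2#} else {#5,1#})"

lemma case6: "\<exists>X :: nat multiset set.
           (\<forall>x\<in>X. is_partition 6 x) \<and>
           \<not> (\<exists>i::nat. 1 \<le> i \<and> 2 * i \<le> 6 \<and> (\<forall>x\<in>X. is_partial_sum i x)) \<and>
           (\<forall>x\<in>X. \<exists>i::nat. 1 \<le> i \<and> 2 * i \<le> 6 \<and> (\<forall>y\<in>X - {x}. is_partial_sum i y)) \<and>
           real (card X) > real 6 / 2 - log 2 (real 6)"
proof (rule abstract[where m=3 and V="{1,2}" and f=f6])
  show "\<forall>v\<in>{1,2}. is_partition 6 (f6 v)"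
    by (simp add: is_partition_def f6_def)
  show "\<forall>v\<in>{1,2}. v \<notin> ps (f6 v)"
    by (simp add: ps_mem_add ps_empty f6_def)
  show "\<forall>v\<in>{1,2}. \<forall>u\<in>{1,2}. u \<noteq> v \<longrightarrow> u \<in> ps (f6 v)"
    by (simp add: ps_mem_add ps_empty f6_def)
  show "\<forall>i. 1 \<le> i \<and> i \<le> 3 \<and> i \<notin> {1,2} \<longrightarrow> (\<exists>v\<in>{1,2}. i \<notin> ps (f6 v))"
  proof (intro allI impI)
    fix i :: nat assume "1 \<le> i \<and> i \<le> 3 \<and> i \<notin> {1,2}"
    then consider "i = 3" by force
    then show "\<exists>v\<in>{1,2}. i \<notin> ps (f6 v)"
    proof cases
      case 1 then show ?thesis by (intro bexI[of _ 1]) (simp_all add: ps_mem_add ps_empty f6_def)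
    qed
  qed
  have "real 2 \<le> log 2 (real 6)" by (rule log_ge) simp
  then show "real (card {1::nat,2}) > real 6 / 2 - log 2 (real 6)" by simp
qed simp_all

definition f7 :: "nat \<Rightarrow> nat multiset" where
  "f7 v = (if v=1 then {#5,2#} else {#6,1#})"

lemma case7: "\<exists>X :: nat multiset set.
           (\<forall>x\<in>X. is_partition 7 x) \<and>
           \<not> (\<exists>i::nat. 1 \<le> i \<and> 2 * i \<le> 7 \<and> (\<forall>x\<in>X. is_partial_sum i x)) \<and>
           (\<forall>x\<in>X. \<exists>i::nat. 1 \<le> i \<and> 2 * i \<le> 7 \<and> (\<forall>y\<in>X - {x}. is_partial_sum i y)) \<and>
           real (card X) > real 7 / 2 - log 2 (real 7)"
proof (rule abstract[where m=3 and V="{1,2}" and f=f7])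
  show "\<forall>v\<in>{1,2}. is_partition 7 (f7 v)"
    by (simp add: is_partition_def f7_def)
  show "\<forall>v\<in>{1,2}. v \<notin> ps (f7 v)"
    by (simp add: ps_mem_add ps_empty f7_def)
  show "\<forall>v\<in>{1,2}. \<forall>u\<in>{1,2}. u \<noteq> v \<longrightarrow> u \<in> ps (f7 v)"
    by (simp add: ps_mem_add ps_empty f7_def)
  show "\<forall>i. 1 \<le> i \<and> i \<le> 3 \<and> i \<notin> {1,2} \<longrightarrow> (\<exists>v\<in>{1,2}. i \<notin> ps (f7 v))"
  proof (intro allI impI)
    fix i :: nat assume "1 \<le> i \<and> i \<le> 3 \<and> i \<notin> {1,2}"
    then consider "i = 3" by force
    then show "\<exists>v\<in>{1,2}. i \<notin> ps (f7 v)"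
    proof cases
      case 1 then show ?thesis by (intro bexI[of _ 1]) (simp_all add: ps_mem_add ps_empty f7_def)
    qed
  qed
  have "real 2 \<le> log 2 (real 7)" by (rule log_ge) simp
  then show "real (card {1::nat,2}) > real 7 / 2 - log 2 (real 7)" by simp
qed simp_all

definition f8 :: "nat \<Rightarrow> nat multiset" where
  "f8 v = (if v=1 then {#6,2#} else {#7,1#})"

lemma case8: "\<exists>X :: nat multiset set.
           (\<forall>x\<in>X. is_partition 8 x) \<and>
           \<not> (\<exists>i::nat. 1 \<le> i \<and> 2 * i \<le> 8 \<and> (\<forall>x\<in>X. is_partial_sum i x)) \<and>
           (\<forall>x\<in>X. \<exists>i::nat. 1 \<le> i \<and> 2 * i \<le> 8 \<and> (\<forall>y\<in>X - {x}. is_partial_sum i y)) \<and>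
           real (card X) > real 8 / 2 - log 2 (real 8)"
proof (rule abstract[where m=4 and V="{1,2}" and f=f8])
  show "\<forall>v\<in>{1,2}. is_partition 8 (f8 v)"
    by (simp add: is_partition_def f8_def)
  show "\<forall>v\<in>{1,2}. v \<notin> ps (f8 v)"
    by (simp add: ps_mem_add ps_empty f8_def)
  show "\<forall>v\<in>{1,2}. \<forall>u\<in>{1,2}. u \<noteq> v \<longrightarrow> u \<in> ps (f8 v)"
    by (simp add: ps_mem_add ps_empty f8_def)
  show "\<forall>i. 1 \<le> i \<and> i \<le> 4 \<and> i \<notin> {1,2} \<longrightarrow> (\<exists>v\<in>{1,2}. i \<notin> ps (f8 v))"
  proof (intro allI impI)
    fix i :: nat assume "1 \<le> i \<and> i \<le> 4 \<and> i \<notin> {1,2}"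
    then consider "i = 3" | "i = 4" by force
    then show "\<exists>v\<in>{1,2}. i \<notin> ps (f8 v)"
    proof cases
      case 1 then show ?thesis by (intro bexI[of _ 1]) (simp_all add: ps_mem_add ps_empty f8_def)
    next
      case 2 then show ?thesis by (intro bexI[of _ 1]) (simp_all add: ps_mem_add ps_empty f8_def)
    qed
  qed
  have "real 3 \<le> log 2 (real 8)" by (rule log_ge) simp
  then show "real (card {1::nat,2}) > real 8 / 2 - log 2 (real 8)" by simp
qed simp_all

definition f9 :: "nat \<Rightarrow> nat multiset" where
  "f9 v = (if v=1 then {#7,2#} else {#8,1#})"

lemma case9: "\<exists>X :: nat multiset set.
           (\<forall>x\<in>X. is_partition 9 x) \<and>
           \<not> (\<exists>i::nat. 1 \<le> i \<and> 2 * i \<le> 9 \<and> (\<forall>x\<in>X. is_partial_sum i x)) \<and>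
           (\<forall>x\<in>X. \<exists>i::nat. 1 \<le> i \<and> 2 * i \<le> 9 \<and> (\<forall>y\<in>X - {x}. is_partial_sum i y)) \<and>
           real (card X) > real 9 / 2 - log 2 (real 9)"
proof (rule abstract[where m=4 and V="{1,2}" and f=f9])
  show "\<forall>v\<in>{1,2}. is_partition 9 (f9 v)"
    by (simp add: is_partition_def f9_def)
  show "\<forall>v\<in>{1,2}. v \<notin> ps (f9 v)"
    by (simp add: ps_mem_add ps_empty f9_def)
  show "\<forall>v\<in>{1,2}. \<forall>u\<in>{1,2}. u \<noteq> v \<longrightarrow> u \<in> ps (f9 v)"
    by (simp add: ps_mem_add ps_empty f9_def)
  show "\<forall>i. 1 \<le> i \<and> i \<le> 4 \<and> i \<notin> {1,2} \<longrightarrow> (\<exists>v\<in>{1,2}. i \<notin> ps (f9 v))"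
  proof (intro allI impI)
    fix i :: nat assume "1 \<le> i \<and> i \<le> 4 \<and> i \<notin> {1,2}"
    then consider "i = 3" | "i = 4" by force
    then show "\<exists>v\<in>{1,2}. i \<notin> ps (f9 v)"
    proof cases
      case 1 then show ?thesis by (intro bexI[of _ 1]) (simp_all add: ps_mem_add ps_empty f9_def)
    next
      case 2 then show ?thesis by (intro bexI[of _ 1]) (simp_all add: ps_mem_add ps_empty f9_def)
    qed
  qed
  have "real 3 \<le> log 2 (real 9)" by (rule log_ge) simp
  then show "real (card {1::nat,2}) > real 9 / 2 - log 2 (real 9)" by simp
qed simp_all

definition f10 :: "nat \<Rightarrow> nat multiset" where
  "f10 v = (if v=1 then {#5,3,2#} else if v=2 then {#6,3,1#} else {#8,1,1#})"

lemma case10: "\<exists>X :: nat multiset set.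
           (\<forall>x\<in>X. is_partition 10 x) \<and>
           \<not> (\<exists>i::nat. 1 \<le> i \<and> 2 * i \<le> 10 \<and> (\<forall>x\<in>X. is_partial_sum i x)) \<and>
           (\<forall>x\<in>X. \<exists>i::nat. 1 \<le> i \<and> 2 * i \<le> 10 \<and> (\<forall>y\<in>X - {x}. is_partial_sum i y)) \<and>
           real (card X) > real 10 / 2 - log 2 (real 10)"
proof (rule abstract[where m=5 and V="{1,2,3}" and f=f10])
  show "\<forall>v\<in>{1,2,3}. is_partition 10 (f10 v)"
    by (simp add: is_partition_def f10_def)
  show "\<forall>v\<in>{1,2,3}. v \<notin> ps (f10 v)"
    by (simp add: ps_mem_add ps_empty f10_def)
  show "\<forall>v\<in>{1,2,3}. \<forall>u\<in>{1,2,3}. u \<noteq> v \<longrightarrow> u \<in> ps (f10 v)"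
    by (simp add: ps_mem_add ps_empty f10_def)
  show "\<forall>i. 1 \<le> i \<and> i \<le> 5 \<and> i \<notin> {1,2,3} \<longrightarrow> (\<exists>v\<in>{1,2,3}. i \<notin> ps (f10 v))"
  proof (intro allI impI)
    fix i :: nat assume "1 \<le> i \<and> i \<le> 5 \<and> i \<notin> {1,2,3}"
    then consider "i = 4" | "i = 5" by force
    then show "\<exists>v\<in>{1,2,3}. i \<notin> ps (f10 v)"
    proof cases
      case 1 then show ?thesis by (intro bexI[of _ 1]) (simp_all add: ps_mem_add ps_empty f10_def)
    next
      case 2 then show ?thesis by (intro bexI[of _ 2]) (simp_all add: ps_mem_add ps_empty f10_def)
    qed
  qed
  have "real 3 \<le> log 2 (real 10)" by (rule log_ge) simp
  then show "real (card {1::nat,2,3}) > real 10 / 2 - log 2 (real 10)" by simp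
qed simp_all

definition f11 :: "nat \<Rightarrow> nat multiset" where
  "f11 v = (if v=1 then {#6,3,2#} else if v=2 then {#7,3,1#} else {#9,1,1#})"

lemma case11: "\<exists>X :: nat multiset set.
           (\<forall>x\<in>X. is_partition 11 x) \<and>
           \<not> (\<exists>i::nat. 1 \<le> i \<and> 2 * i \<le> 11 \<and> (\<forall>x\<in>X. is_partial_sum i x)) \<and>
           (\<forall>x\<in>X. \<exists>i::nat. 1 \<le> i \<and> 2 * i \<le> 11 \<and> (\<forall>y\<in>X - {x}. is_partial_sum i y)) \<and>
           real (card X) > real 11 / 2 - log 2 (real 11)"
proof (rule abstract[where m=5 and V="{1,2,3}" and f=f11])
  show "\<forall>v\<in>{1,2,3}. is_partition 11 (f11 v)"
    by (simp add: is_partition_def f11_def)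
  show "\<forall>v\<in>{1,2,3}. v \<notin> ps (f11 v)"
    by (simp add: ps_mem_add ps_empty f11_def)
  show "\<forall>v\<in>{1,2,3}. \<forall>u\<in>{1,2,3}. u \<noteq> v \<longrightarrow> u \<in> ps (f11 v)"
    by (simp add: ps_mem_add ps_empty f11_def)
  show "\<forall>i. 1 \<le> i \<and> i \<le> 5 \<and> i \<notin> {1,2,3} \<longrightarrow> (\<exists>v\<in>{1,2,3}. i \<notin> ps (f11 v))"
  proof (intro allI impI)
    fix i :: nat assume "1 \<le> i \<and> i \<le> 5 \<and> i \<notin> {1,2,3}"
    then consider "i = 4" | "i = 5" by force
    then show "\<exists>v\<in>{1,2,3}. i \<notin> ps (f11 v)"
    proof cases
      case 1 then show ?thesis by (intro bexI[of _ 1]) (simp_all add: ps_mem_add ps_empty f11_def)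
    next
      case 2 then show ?thesis by (intro bexI[of _ 2]) (simp_all add: ps_mem_add ps_empty f11_def)
    qed
  qed
  have "real 3 \<le> log 2 (real 11)" by (rule log_ge) simp
  then show "real (card {1::nat,2,3}) > real 11 / 2 - log 2 (real 11)" by simp
qed simp_all

definition f12 :: "nat \<Rightarrow> nat multiset" where
  "f12 v = (if v=1 then {#5,3,2,2#} else if v=2 then {#8,3,1#} else if v=3 then {#6,4,1,1#} else {#9,2,1#})"

lemma case12: "\<exists>X :: nat multiset set.
           (\<forall>x\<in>X. is_partition 12 x) \<and>
           \<not> (\<exists>i::nat. 1 \<le> i \<and> 2 * i \<le> 12 \<and> (\<forall>x\<in>X. is_partial_sum i x)) \<and>
           (\<forall>x\<in>X. \<exists>i::nat. 1 \<le> i \<and> 2 * i \<le> 12 \<and> (\<forall>y\<in>X - {x}. is_partial_sum i y)) \<and>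
           real (card X) > real 12 / 2 - log 2 (real 12)"
proof (rule abstract[where m=6 and V="{1,2,3,4}" and f=f12])
  show "\<forall>v\<in>{1,2,3,4}. is_partition 12 (f12 v)"
    by (simp add: is_partition_def f12_def)
  show "\<forall>v\<in>{1,2,3,4}. v \<notin> ps (f12 v)"
    by (simp add: ps_mem_add ps_empty f12_def)
  show "\<forall>v\<in>{1,2,3,4}. \<forall>u\<in>{1,2,3,4}. u \<noteq> v \<longrightarrow> u \<in> ps (f12 v)"
    by (simp add: ps_mem_add ps_empty f12_def)
  show "\<forall>i. 1 \<le> i \<and> i \<le> 6 \<and> i \<notin> {1,2,3,4} \<longrightarrow> (\<exists>v\<in>{1,2,3,4}. i \<notin> ps (f12 v))"
  proof (intro allI impI)
    fix i :: nat assume "1 \<le> i \<and> i \<le> 6 \<and> i \<notin> {1,2,3,4}"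
    then consider "i = 5" | "i = 6" by force
    then show "\<exists>v\<in>{1,2,3,4}. i \<notin> ps (f12 v)"
    proof cases
      case 1 then show ?thesis by (intro bexI[of _ 2]) (simp_all add: ps_mem_add ps_empty f12_def)
    next
      case 2 then show ?thesis by (intro bexI[of _ 1]) (simp_all add: ps_mem_add ps_empty f12_def)
    qed
  qed
  have "real 3 \<le> log 2 (real 12)" by (rule log_ge) simp
  then show "real (card {1::nat,2,3,4}) > real 12 / 2 - log 2 (real 12)" by simp
qed simp_all

definition f13 :: "nat \<Rightarrow> nat multiset" where
  "f13 v = (if v=1 then {#6,3,2,2#} else if v=2 then {#9,3,1#} else if v=3 then {#7,4,1,1#} else {#10,2,1#})"

lemma case13: "\<exists>X :: nat multiset set.
           (\<forall>x\<in>X. is_partition 13 x) \<and>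
           \<not> (\<exists>i::nat. 1 \<le> i \<and> 2 * i \<le> 13 \<and> (\<forall>x\<in>X. is_partial_sum i x)) \<and>
           (\<forall>x\<in>X. \<exists>i::nat. 1 \<le> i \<and> 2 * i \<le> 13 \<and> (\<forall>y\<in>X - {x}. is_partial_sum i y)) \<and>
           real (card X) > real 13 / 2 - log 2 (real 13)"
proof (rule abstract[where m=6 and V="{1,2,3,4}" and f=f13])
  show "\<forall>v\<in>{1,2,3,4}. is_partition 13 (f13 v)"
    by (simp add: is_partition_def f13_def)
  show "\<forall>v\<in>{1,2,3,4}. v \<notin> ps (f13 v)"
    by (simp add: ps_mem_add ps_empty f13_def)
  show "\<forall>v\<in>{1,2,3,4}. \<forall>u\<in>{1,2,3,4}. u \<noteq> v \<longrightarrow> u \<in> ps (f13 v)"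
    by (simp add: ps_mem_add ps_empty f13_def)
  show "\<forall>i. 1 \<le> i \<and> i \<le> 6 \<and> i \<notin> {1,2,3,4} \<longrightarrow> (\<exists>v\<in>{1,2,3,4}. i \<notin> ps (f13 v))"
  proof (intro allI impI)
    fix i :: nat assume "1 \<le> i \<and> i \<le> 6 \<and> i \<notin> {1,2,3,4}"
    then consider "i = 5" | "i = 6" by force
    then show "\<exists>v\<in>{1,2,3,4}. i \<notin> ps (f13 v)"
    proof cases
      case 1 then show ?thesis by (intro bexI[of _ 2]) (simp_all add: ps_mem_add ps_empty f13_def)
    next
      case 2 then show ?thesis by (intro bexI[of _ 2]) (simp_all add: ps_mem_add ps_empty f13_def)
    qed
  qed
  have "real 3 \<le> log 2 (real 13)" by (rule log_ge) simp
  then show "real (card {1::nat,2,3,4}) > real 13 / 2 - log 2 (real 13)" by simp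
qed simp_all

definition f14 :: "nat \<Rightarrow> nat multiset" where
  "f14 v = (if v=1 then {#7,3,2,2#} else if v=2 then {#6,4,3,1#} else if v=3 then {#8,4,1,1#} else if v=4 then {#6,5,2,1#} else {#10,2,1,1#})"

lemma case14: "\<exists>X :: nat multiset set.
           (\<forall>x\<in>X. is_partition 14 x) \<and>
           \<not> (\<exists>i::nat. 1 \<le> i \<and> 2 * i \<le> 14 \<and> (\<forall>x\<in>X. is_partial_sum i x)) \<and>
           (\<forall>x\<in>X. \<exists>i::nat. 1 \<le> i \<and> 2 * i \<le> 14 \<and> (\<forall>y\<in>X - {x}. is_partial_sum i y)) \<and>
           real (card X) > real 14 / 2 - log 2 (real 14)"
proof (rule abstract[where m=7 and V="{1,2,3,4,5}" and f=f14])
  show "\<forall>v\<in>{1,2,3,4,5}. is_partition 14 (f14 v)"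
    by (simp add: is_partition_def f14_def)
  show "\<forall>v\<in>{1,2,3,4,5}. v \<notin> ps (f14 v)"
    by (simp add: ps_mem_add ps_empty f14_def)
  show "\<forall>v\<in>{1,2,3,4,5}. \<forall>u\<in>{1,2,3,4,5}. u \<noteq> v \<longrightarrow> u \<in> ps (f14 v)"
    by (simp add: ps_mem_add ps_empty f14_def)
  show "\<forall>i. 1 \<le> i \<and> i \<le> 7 \<and> i \<notin> {1,2,3,4,5} \<longrightarrow> (\<exists>v\<in>{1,2,3,4,5}. i \<notin> ps (f14 v))"
  proof (intro allI impI)
    fix i :: nat assume "1 \<le> i \<and> i \<le> 7 \<and> i \<notin> {1,2,3,4,5}"
    then consider "i = 6" | "i = 7" by force
    then show "\<exists>v\<in>{1,2,3,4,5}. i \<notin> ps (f14 v)"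
    proof cases
      case 1 then show ?thesis by (intro bexI[of _ 1]) (simp_all add: ps_mem_add ps_empty f14_def)
    next
      case 2 then show ?thesis by (intro bexI[of _ 3]) (simp_all add: ps_mem_add ps_empty f14_def)
    qed
  qed
  have "real 3 \<le> log 2 (real 14)" by (rule log_ge) simp
  then show "real (card {1::nat,2,3,4,5}) > real 14 / 2 - log 2 (real 14)" by simp
qed simp_all

definition f15 :: "nat \<Rightarrow> nat multiset" where
  "f15 v = (if v=1 then {#8,3,2,2#} else if v=2 then {#7,4,3,1#} else if v=3 then {#9,4,1,1#} else if v=4 then {#7,5,2,1#} else {#11,2,1,1#})"

lemma case15: "\<exists>X :: nat multiset set.
           (\<forall>x\<in>X. is_partition 15 x) \<and>
           \<not> (\<exists>i::nat. 1 \<le> i \<and> 2 * i \<le> 15 \<and> (\<forall>x\<in>X. is_partial_sum i x)) \<and>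
           (\<forall>x\<in>X. \<exists>i::nat. 1 \<le> i \<and> 2 * i \<le> 15 \<and> (\<forall>y\<in>X - {x}. is_partial_sum i y)) \<and>
           real (card X) > real 15 / 2 - log 2 (real 15)"
proof (rule abstract[where m=7 and V="{1,2,3,4,5}" and f=f15])
  show "\<forall>v\<in>{1,2,3,4,5}. is_partition 15 (f15 v)"
    by (simp add: is_partition_def f15_def)
  show "\<forall>v\<in>{1,2,3,4,5}. v \<notin> ps (f15 v)"
    by (simp add: ps_mem_add ps_empty f15_def)
  show "\<forall>v\<in>{1,2,3,4,5}. \<forall>u\<in>{1,2,3,4,5}. u \<noteq> v \<longrightarrow> u \<in> ps (f15 v)"
    by (simp add: ps_mem_add ps_empty f15_def)
  show "\<forall>i. 1 \<le> i \<and> i \<le> 7 \<and> i \<notin> {1,2,3,4,5} \<longrightarrow> (\<exists>v\<in>{1,2,3,4,5}. i \<notin> ps (f15 v))"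
  proof (intro allI impI)
    fix i :: nat assume "1 \<le> i \<and> i \<le> 7 \<and> i \<notin> {1,2,3,4,5}"
    then consider "i = 6" | "i = 7" by force
    then show "\<exists>v\<in>{1,2,3,4,5}. i \<notin> ps (f15 v)"
    proof cases
      case 1 then show ?thesis by (intro bexI[of _ 1]) (simp_all add: ps_mem_add ps_empty f15_def)
    next
      case 2 then show ?thesis by (intro bexI[of _ 3]) (simp_all add: ps_mem_add ps_empty f15_def)
    qed
  qed
  have "real 3 \<le> log 2 (real 15)" by (rule log_ge) simp
  then show "real (card {1::nat,2,3,4,5}) > real 15 / 2 - log 2 (real 15)" by simp
qed simp_all

definition f16 :: "nat \<Rightarrow> nat multiset" where
  "f16 v = (if v=1 then {#9,3,2,2#} else if v=2 then {#8,4,3,1#} else if v=3 then {#10,4,1,1#} else if v=4 then {#8,5,2,1#} else {#12,2,1,1#})"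

lemma case16: "\<exists>X :: nat multiset set.
           (\<forall>x\<in>X. is_partition 16 x) \<and>
           \<not> (\<exists>i::nat. 1 \<le> i \<and> 2 * i \<le> 16 \<and> (\<forall>x\<in>X. is_partial_sum i x)) \<and>
           (\<forall>x\<in>X. \<exists>i::nat. 1 \<le> i \<and> 2 * i \<le> 16 \<and> (\<forall>y\<in>X - {x}. is_partial_sum i y)) \<and>
           real (card X) > real 16 / 2 - log 2 (real 16)"
proof (rule abstract[where m=8 and V="{1,2,3,4,5}" and f=f16])
  show "\<forall>v\<in>{1,2,3,4,5}. is_partition 16 (f16 v)"
    by (simp add: is_partition_def f16_def)
  show "\<forall>v\<in>{1,2,3,4,5}. v \<notin> ps (f16 v)"
    by (simp add: ps_mem_add ps_empty f16_def)
  show "\<forall>v\<in>{1,2,3,4,5}. \<forall>u\<in>{1,2,3,4,5}. u \<noteq> v \<longrightarrow> u \<in> ps (f16 v)"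
    by (simp add: ps_mem_add ps_empty f16_def)
  show "\<forall>i. 1 \<le> i \<and> i \<le> 8 \<and> i \<notin> {1,2,3,4,5} \<longrightarrow> (\<exists>v\<in>{1,2,3,4,5}. i \<notin> ps (f16 v))"
  proof (intro allI impI)
    fix i :: nat assume "1 \<le> i \<and> i \<le> 8 \<and> i \<notin> {1,2,3,4,5}"
    then consider "i = 6" | "i = 7" | "i = 8" by force
    then show "\<exists>v\<in>{1,2,3,4,5}. i \<notin> ps (f16 v)"
    proof cases
      case 1 then show ?thesis by (intro bexI[of _ 1]) (simp_all add: ps_mem_add ps_empty f16_def)
    next
      case 2 then show ?thesis by (intro bexI[of _ 3]) (simp_all add: ps_mem_add ps_empty f16_def)
    next
      case 3 then show ?thesis by (intro bexI[of _ 1]) (simp_all add: ps_mem_add ps_empty f16_def)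
    qed
  qed
  have "real 4 \<le> log 2 (real 16)" by (rule log_ge) simp
  then show "real (card {1::nat,2,3,4,5}) > real 16 / 2 - log 2 (real 16)" by simp
qed simp_all

definition f17 :: "nat \<Rightarrow> nat multiset" where
  "f17 v = (if v=1 then {#10,3,2,2#} else if v=2 then {#9,4,3,1#} else if v=3 then {#11,4,1,1#} else if v=4 then {#9,5,2,1#} else {#13,2,1,1#})"

lemma case17: "\<exists>X :: nat multiset set.
           (\<forall>x\<in>X. is_partition 17 x) \<and>
           \<not> (\<exists>i::nat. 1 \<le> i \<and> 2 * i \<le> 17 \<and> (\<forall>x\<in>X. is_partial_sum i x)) \<and>
           (\<forall>x\<in>X. \<exists>i::nat. 1 \<le> i \<and> 2 * i \<le> 17 \<and> (\<forall>y\<in>X - {x}. is_partial_sum i y)) \<and>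
           real (card X) > real 17 / 2 - log 2 (real 17)"
proof (rule abstract[where m=8 and V="{1,2,3,4,5}" and f=f17])
  show "\<forall>v\<in>{1,2,3,4,5}. is_partition 17 (f17 v)"
    by (simp add: is_partition_def f17_def)
  show "\<forall>v\<in>{1,2,3,4,5}. v \<notin> ps (f17 v)"
    by (simp add: ps_mem_add ps_empty f17_def)
  show "\<forall>v\<in>{1,2,3,4,5}. \<forall>u\<in>{1,2,3,4,5}. u \<noteq> v \<longrightarrow> u \<in> ps (f17 v)"
    by (simp add: ps_mem_add ps_empty f17_def)
  show "\<forall>i. 1 \<le> i \<and> i \<le> 8 \<and> i \<notin> {1,2,3,4,5} \<longrightarrow> (\<exists>v\<in>{1,2,3,4,5}. i \<notin> ps (f17 v))"
  proof (intro allI impI)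
    fix i :: nat assume "1 \<le> i \<and> i \<le> 8 \<and> i \<notin> {1,2,3,4,5}"
    then consider "i = 6" | "i = 7" | "i = 8" by force
    then show "\<exists>v\<in>{1,2,3,4,5}. i \<notin> ps (f17 v)"
    proof cases
      case 1 then show ?thesis by (intro bexI[of _ 1]) (simp_all add: ps_mem_add ps_empty f17_def)
    next
      case 2 then show ?thesis by (intro bexI[of _ 3]) (simp_all add: ps_mem_add ps_empty f17_def)
    next
      case 3 then show ?thesis by (intro bexI[of _ 1]) (simp_all add: ps_mem_add ps_empty f17_def)
    qed
  qed
  have "real 4 \<le> log 2 (real 17)" by (rule log_ge) simp
  then show "real (card {1::nat,2,3,4,5}) > real 17 / 2 - log 2 (real 17)" by simp
qed simp_all

lemma small:
  fixes n :: nat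
  assumes "5 \<le> n" "n \<le> 17"
  shows "\<exists>X :: nat multiset set.
           (\<forall>x\<in>X. is_partition n x) \<and>
           \<not> (\<exists>i::nat. 1 \<le> i \<and> 2 * i \<le> n \<and> (\<forall>x\<in>X. is_partial_sum i x)) \<and>
           (\<forall>x\<in>X. \<exists>i::nat. 1 \<le> i \<and> 2 * i \<le> n \<and> (\<forall>y\<in>X - {x}. is_partial_sum i y)) \<and>
           real (card X) > real n / 2 - log 2 (real n)"
proof -
  have "n = 5 \<or> n = 6 \<or> n = 7 \<or> n = 8 \<or> n = 9 \<or> n = 10 \<or> n = 11 \<or> n = 12 \<or> n = 13 \<or> n = 14 \<or> n = 15 \<or> n = 16 \<or> n = 17" using assms by arith
  then show ?thesis
    by (elim disjE) (use case5 case6 case7 case8 case9 case10 case11 case12 case13 case14 case15 case16 case17 in simp_all)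
qed

lemma GG_in_VV:
  assumes n18: "18 \<le> n" and w: "w \<in> WW n"
  shows "GG n w \<in> VV n"
proof -
  define m where "m = n div 2"
  define D where "D = (m - 1) div 3"
  define cnd where "cnd = (n mod 6 = 0 \<or> n mod 4 = 2)"
  have F1: "2*m \<le> n" "n \<le> 2*m+1" unfolding m_def by auto
  have F2: "3*D + 1 \<le> m" "m \<le> 3*D+3" using n18 unfolding D_def m_def by auto
  have WWe: "WW n = Wt D \<union> (if cnd then {m} else {})" unfolding WW_def Wm_def D_def m_def cnd_def by simp
  have VVe: "VV n = {1..m} - WW n" unfolding VV_def m_def by simp
  have notWt: "\<And>u. D < u \<Longrightarrow> u \<notin> Wt D" using Wt_prop by force
  show ?thesis
  proof (cases "w \<in> Wt D")
    case True
    then have wp: "1 \<le> w" "w \<le> D" using Wt_prop by blast+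
    then have "w \<noteq> m" using F2 by linarith
    then have g: "GG n w = m - w" unfolding GG_def using m_def by simp
    have "D < m - w" using wp F2 by linarith
    then show ?thesis unfolding g VVe WWe using notWt[of "m-w"] wp F2 by auto
  next
    case False
    then have wm: "w = m" "cnd" using w unfolding WWe by (auto split: if_splits)
    show ?thesis
    proof (cases "n mod 6 = 0")
      case True
      then have g: "GG n w = n div 3" unfolding GG_def using wm m_def by simp
      define k where "k = n div 6"
      have nk: "n = 6*k" using div_mult_mod_eq[of n 6] True unfolding k_def by simp
      have mk: "m = 3*k" "D + 1 = k" "n div 3 = 2*k" using nk F2 unfolding m_def by auto
      then show ?thesis unfolding g VVe WWe using notWt[of "n div 3"] n18 nk by auto
    next
      case False
      then have n4: "n mod 4 = 2" using wm unfolding cnd_def by simp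
      then have g: "GG n w = (n-2) div 4" unfolding GG_def using wm False m_def by simp
      have n4': "n = 4*(n div 4) + 2" using div_mult_mod_eq[of n 4] n4 by simp
      then have "(n-2) div 4 = n div 4" by (metis add_diff_cancel_right' nonzero_mult_div_cancel_left zero_neq_numeral)
      then have nv: "n = 4*((n-2) div 4)+2" using n4' by simp
      then have "m = 2*((n-2) div 4) + 1" using F1 by linarith
      then show ?thesis unfolding g VVe WWe using notWt[of "(n-2) div 4"] n18 F2 nv by auto
    qed
  qed
qed

lemma general:
  fixes n :: nat
  assumes n18: "18 \<le> n"
  shows "\<exists>X :: nat multiset set.
           (\<forall>x\<in>X. is_partition n x) \<and>
           \<not> (\<exists>i::nat. 1 \<le> i \<and> 2 * i \<le> n \<and> (\<forall>x\<in>X. is_partial_sum i x)) \<and>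
           (\<forall>x\<in>X. \<exists>i::nat. 1 \<le> i \<and> 2 * i \<le> n \<and> (\<forall>y\<in>X - {x}. is_partial_sum i y)) \<and>
           real (card X) > real n / 2 - log 2 (real n)"
proof -
  define m where "m = n div 2"
  define D where "D = (m - 1) div 3"
  define cnd where "cnd = (n mod 6 = 0 \<or> n mod 4 = 2)"
  have F1: "2*m \<le> n" "n \<le> 2*m+1" unfolding m_def by auto
  have F2: "3*D + 1 \<le> m" "m \<le> 3*D+3" using n18 unfolding D_def m_def by auto
  have F3: "9 \<le> m" "2 \<le> D" using n18 F1 F2 by auto
  have WWe: "WW n = Wt D \<union> (if cnd then {m} else {})" unfolding WW_def Wm_def D_def m_def cnd_def by simp
  have VVe: "VV n = {1..m} - WW n" unfolding VV_def m_def by simp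
  define f where "f v = (SOME x. is_partition n x \<and> (\<forall>u\<in>VV n. u \<noteq> v \<longrightarrow> u \<in> ps x) \<and> v \<notin> ps x
             \<and> (\<forall>w\<in>WW n. GG n w = v \<longrightarrow> w \<notin> ps x))" for v
  have fP: "\<And>v. v \<in> VV n \<Longrightarrow> is_partition n (f v) \<and> (\<forall>u\<in>VV n. u \<noteq> v \<longrightarrow> u \<in> ps (f v)) \<and> v \<notin> ps (f v)
             \<and> (\<forall>w\<in>WW n. GG n w = v \<longrightarrow> w \<notin> ps (f v))"
    unfolding f_def by (rule someI_ex) (rule main_exists[OF n18])
  have Wsub: "WW n \<subseteq> {1..m}"
  proof
    fix x assume "x \<in> WW n"
    then consider "x \<in> Wt D" | "x = m" unfolding WWe by (auto split: if_splits)
    then show "x \<in> {1..m}"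
    proof cases
      case 1 then have "1 \<le> x" "x \<le> D" using Wt_prop by blast+
      then show ?thesis using F2 by simp
    next
      case 2 then show ?thesis using F3 by simp
    qed
  qed
  obtain K where K: "D < 2^K" "2^K \<le> 2*D" using pow_exists[of D] F3 by auto
  have cWt: "card (Wt D) \<le> K" using Wt_card[of D K] K F3 by simp
  have cW: "card (WW n) \<le> K + (if cnd then 1 else 0)"
  proof -
    have "card (WW n) \<le> card (Wt D) + card (if cnd then {m} else {})" unfolding WWe by (rule card_Un_le)
    then show ?thesis using cWt by (auto split: if_splits)
  qed
  have cV: "card (VV n) + card (WW n) = m"
  proof -
    have "card (VV n) = card {1..m} - card (WW n)" unfolding VVe by (rule card_Diff_subset) (use Wsub finite_subset in auto)
    moreover have "card (WW n) \<le> card {1..m}" using Wsub by (rule card_mono[rotated]) simp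
    ultimately show ?thesis by simp
  qed
  have cnd_even: "cnd \<Longrightarrow> n = 2*m"
  proof -
    assume "cnd"
    then have "n mod 6 mod 2 = 0 \<or> n mod 4 mod 2 = 0" unfolding cnd_def by auto
    then have "n mod 2 = 0" using mod_mod_cancel[of 2 6 n] mod_mod_cancel[of 2 4 n] by auto
    then show "n = 2*m" using div_mult_mod_eq[of n 2] unfolding m_def by simp
  qed
  have lowV: "real n / 2 - real K - 1 \<le> real (card (VV n))"
  proof (cases cnd)
    case True
    then have "card (VV n) + K + 1 \<ge> m" using cV cW by simp
    then have "real (card (VV n)) + real K + 1 \<ge> real m" by linarith
    moreover have "real n = 2 * real m" using cnd_even[OF True] by simp
    ultimately show ?thesis by linarith
  next
    case False
    then have "card (VV n) + K \<ge> m" using cV cW by simp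
    then have "real (card (VV n)) + real K \<ge> real m" by linarith
    moreover have "real n \<le> 2 * real m + 1" using F1 by linarith
    ultimately show ?thesis by linarith
  qed
  have pw: "2^(K+1) < n" using K F2 F1 by simp
  have "real (K+1) < log 2 (real n)"
  proof -
    have "(2::real) powr real (K+1) = 2^(K+1)" by (rule powr_realpow) simp
    also have "(2::real)^(K+1) = real (2^(K+1))" by simp
    also have "\<dots> < real n" using pw by (metis of_nat_less_iff)
    finally have "2 powr real (K+1) < real n" .
    moreover have "0 < real n" using n18 by simp
    ultimately show ?thesis by (simp add: less_log_iff)
  qed
  then have crd: "real (card (VV n)) > real n / 2 - log 2 (real n)" using lowV by simp
  show ?thesis
  proof (rule abstract[where m=m and V="VV n" and f=f])
    show "m = n div 2" by (simp add: m_def)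
    show "finite (VV n)" unfolding VVe by simp
    show "VV n \<subseteq> {1..m}" unfolding VVe by auto
    show "\<forall>v\<in>VV n. is_partition n (f v)" using fP by blast
    show "\<forall>v\<in>VV n. v \<notin> ps (f v)" using fP by blast
    show "\<forall>v\<in>VV n. \<forall>u\<in>VV n. u \<noteq> v \<longrightarrow> u \<in> ps (f v)" using fP by blast
    show "\<forall>i. 1 \<le> i \<and> i \<le> m \<and> i \<notin> VV n \<longrightarrow> (\<exists>v\<in>VV n. i \<notin> ps (f v))"
    proof (intro allI impI)
      fix i assume i: "1 \<le> i \<and> i \<le> m \<and> i \<notin> VV n"
      then have iW: "i \<in> WW n" unfolding VVe by auto
      have g: "GG n i \<in> VV n" by (rule GG_in_VV[OF n18 iW])
      have "i \<notin> ps (f (GG n i))" using fP[OF g] iW by blast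
      then show "\<exists>v\<in>VV n. i \<notin> ps (f v)" using g by blast
    qed
    show "real (card (VV n)) > real n / 2 - log 2 (real n)" using crd .
  qed
qed

theorem proposition1p4:
  fixes n :: nat
  assumes "n \<ge> 5"
  shows "\<exists>X :: nat multiset set.
           (\<forall>x\<in>X. is_partition n x) \<and>
           \<not> (\<exists>i::nat. 1 \<le> i \<and> 2 * i \<le> n \<and> (\<forall>x\<in>X. is_partial_sum i x)) \<and>
           (\<forall>x\<in>X. \<exists>i::nat. 1 \<le> i \<and> 2 * i \<le> n \<and> (\<forall>y\<in>X - {x}. is_partial_sum i y)) \<and>
           real (card X) > real n / 2 - log 2 (real n)"
proof (cases "18 \<le> n")
  case True then show ?thesis by (rule general)
next
  case False then show ?thesis using small[of n] assms by simp
qed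

end
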